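(* Let $\mathcal{T}$ be a single-elimination tournament. Then: (i) every $u\in V(\mathcal{T})$ has $P(u)\ne\emptyset$; (ii) for all $u,v\in V(\mathcal{T})$, $P(u)=P(v)$ if and only if $u=v$; (iii) for $u,v\in V(\mathcal{T})$, $P(u)\subseteq P(v)$ if and only if there exists a directed walk from $u$ to $v$; (iv) for all distinct $u,v\in V(\mathcal{T})$, either $P(u)\cap P(v)=\emptyset$, or $P(u)\subsetneq P(v)$, or $P(v)\subsetneq P(u)$; (v) for every match $x\in M(\mathcal{T})$, the sets $\{P(u):u\in N^-(x)\}$ partition $P(x)$, and $P(u)\subsetneq P(x)$ and $P(u)\ne\emptyset$ for all $u\in N^-(x)$.
   Context: A single-elimination tournament is a finite directed graph $\mathcal{T}$ such that: (a) $\mathcal{T}$ has exactly one sink (vertex with no out-neighbours); (b) every non-sink vertex has exactly one out-neighbour; (c) $\mathcal{T}$ has no directed cycles; (d) $|N^-(v)|\ne 1$ for every vertex $v$, where $N^-(v)$ (resp. $N^+(v)$) denotes the set of in-neighbours (resp. out-neighbours) of $v$. The players $P(\mathcal{T})$ are the sources (vertices with no in-neighbours) and the matches are $M(\mathcal{T})=V(\mathcal{T})\setminus P(\mathcal{T})$. A directed walk from $u$ to $v$ is a sequence $(u_1,\dots,u_t)$, $t\ge1$, with $u_1=u$, $u_t=v$ and $u_{i+1}\in N^+(u_i)$ for $1\le i<t$. For a vertex $u$, $P(u)$ is the set of players $a$ for which there is a directed walk from $a$ to $u$. *)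

theory Defs
  imports Main "HOL-Library.Disjoint_Sets"
begin

definition out_nbrs :: "('a \<times> 'a) set \<Rightarrow> 'a \<Rightarrow> 'a set" where
  "out_nbrs E v = {w. (v, w) \<in> E}"

definition in_nbrs :: "('a \<times> 'a) set \<Rightarrow> 'a \<Rightarrow> 'a set" where
  "in_nbrs E v = {u. (u, v) \<in> E}"

definition sinks :: "'a set \<Rightarrow> ('a \<times> 'a) set \<Rightarrow> 'a set" where
  "sinks V E = {v \<in> V. out_nbrs E v = {}}"

definition players :: "'a set \<Rightarrow> ('a \<times> 'a) set \<Rightarrow> 'a set" where
  "players V E = {v \<in> V. in_nbrs E v = {}}"

definition matches :: "'a set \<Rightarrow> ('a \<times> 'a) set \<Rightarrow> 'a set" where
  "matches V E = V - players V E"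

definition dwalk :: "'a set \<Rightarrow> ('a \<times> 'a) set \<Rightarrow> 'a \<Rightarrow> 'a \<Rightarrow> 'a list \<Rightarrow> bool" where
  "dwalk V E u v xs \<longleftrightarrow> xs \<noteq> [] \<and> set xs \<subseteq> V \<and> hd xs = u \<and> last xs = v \<and>
     (\<forall>i. i + 1 < length xs \<longrightarrow> (xs ! i, xs ! (i + 1)) \<in> E)"

definition has_dwalk :: "'a set \<Rightarrow> ('a \<times> 'a) set \<Rightarrow> 'a \<Rightarrow> 'a \<Rightarrow> bool" where
  "has_dwalk V E u v \<longleftrightarrow> (\<exists>xs. dwalk V E u v xs)"

definition Pl :: "'a set \<Rightarrow> ('a \<times> 'a) set \<Rightarrow> 'a \<Rightarrow> 'a set" where
  "Pl V E u = {a \<in> players V E. has_dwalk V E a u}"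

definition single_elim_tournament :: "'a set \<Rightarrow> ('a \<times> 'a) set \<Rightarrow> bool" where
  "single_elim_tournament V E \<longleftrightarrow>
     finite V \<and> E \<subseteq> V \<times> V \<and>
     card (sinks V E) = 1 \<and>
     (\<forall>v \<in> V - sinks V E. card (out_nbrs E v) = 1) \<and>
     acyclic E \<and>
     (\<forall>v \<in> V. card (in_nbrs E v) \<noteq> 1)"

end

theory Submission
  imports Defs
begin

lemma walk_rtrancl:
  "xs \<noteq> [] \<Longrightarrow> (\<forall>i. i + 1 < length xs \<longrightarrow> (xs ! i, xs ! (i + 1)) \<in> E)
   \<Longrightarrow> (hd xs, last xs) \<in> E\<^sup>*"
proof (induction xs)
  case Nil then show ?case by simp
next
  case (Cons x xs)
  show ?case
  proof (cases "xs = []")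
    case True then show ?thesis by simp
  next
    case False
    have e: "(x, hd xs) \<in> E" using Cons.prems(2)[rule_format, of 0] False
      by (simp add: hd_conv_nth)
    have "\<forall>i. i + 1 < length xs \<longrightarrow> (xs ! i, xs ! (i + 1)) \<in> E"
    proof (intro allI impI)
      fix i assume "i + 1 < length xs"
      then show "(xs ! i, xs ! (i + 1)) \<in> E" using Cons.prems(2)[rule_format, of "Suc i"] by simp
    qed
    then have "(hd xs, last xs) \<in> E\<^sup>*" using Cons.IH False by blast
    then show ?thesis using e False by simp
  qed
qed

lemma rtrancl_walk:
  assumes "(u, v) \<in> E\<^sup>*" "E \<subseteq> V \<times> V" "u \<in> V"
  shows "\<exists>xs. dwalk V E u v xs"
  using assms
proof (induction rule: converse_rtrancl_induct)
  case base
  then show ?case by (intro exI[of _ "[v]"]) (simp add: dwalk_def)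
next
  case (step y z)
  then have "z \<in> V" by auto
  then obtain xs where xs: "dwalk V E z v xs" using step by blast
  have "dwalk V E y v (y # xs)"
    unfolding dwalk_def
  proof (intro conjI allI impI)
    show "set (y # xs) \<subseteq> V" using xs step by (auto simp: dwalk_def)
    show "last (y # xs) = v" using xs by (auto simp: dwalk_def)
    fix i assume i: "i + 1 < length (y # xs)"
    show "((y # xs) ! i, (y # xs) ! (i + 1)) \<in> E"
    proof (cases i)
      case 0 then show ?thesis using xs step by (auto simp: dwalk_def hd_conv_nth)
    next
      case (Suc j) then show ?thesis using xs i by (auto simp: dwalk_def)
    qed
  qed simp_all
  then show ?case by blast
qed

lemma has_dwalk_iff:
  assumes "E \<subseteq> V \<times> V"
  shows "has_dwalk V E u v \<longleftrightarrow> u \<in> V \<and> (u, v) \<in> E\<^sup>*"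
proof
  assume "has_dwalk V E u v"
  then obtain xs where "dwalk V E u v xs" by (auto simp: has_dwalk_def)
  then show "u \<in> V \<and> (u, v) \<in> E\<^sup>*"
    using walk_rtrancl[of xs E] by (auto simp: dwalk_def)
next
  assume "u \<in> V \<and> (u, v) \<in> E\<^sup>*"
  then show "has_dwalk V E u v" using rtrancl_walk[OF _ assms] by (auto simp: has_dwalk_def)
qed

locale SET =
  fixes V E
  assumes T: "single_elim_tournament V E"
begin

lemma fin: "finite V" and sub: "E \<subseteq> V \<times> V" and acyc: "acyclic E"
  and indeg: "\<And>v. v \<in> V \<Longrightarrow> card (in_nbrs E v) \<noteq> 1"
  and outdeg: "\<And>v. v \<in> V - sinks V E \<Longrightarrow> card (out_nbrs E v) = 1"
  using T by (auto simp: single_elim_tournament_def)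

lemma sv: "single_valued E"
proof (rule single_valuedI)
  fix x y z assume xy: "(x, y) \<in> E" and xz: "(x, z) \<in> E"
  then have "x \<in> V - sinks V E" using sub by (auto simp: sinks_def out_nbrs_def)
  then have "card (out_nbrs E x) = 1" by (rule outdeg)
  then obtain w where "out_nbrs E x = {w}" by (auto simp: card_Suc_eq)
  moreover have "y \<in> out_nbrs E x" "z \<in> out_nbrs E x" using xy xz by (auto simp: out_nbrs_def)
  ultimately show "y = z" by (metis singletonD)
qed

lemma Pl_eq: "Pl V E u = {a \<in> players V E. (a, u) \<in> E\<^sup>*}"
  using has_dwalk_iff[OF sub] by (auto simp: Pl_def players_def)

lemma mono: "(u, v) \<in> E\<^sup>* \<Longrightarrow> Pl V E u \<subseteq> Pl V E v"
  unfolding Pl_eq by auto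

lemma nonempty:
  assumes "u \<in> V" shows "Pl V E u \<noteq> {}"
proof -
  have wf: "wf E" using finite_acyclic_wf[OF finite_subset[OF sub] acyc] fin by simp
  obtain a where a: "a \<in> {a. (a, u) \<in> E\<^sup>*}" and m: "\<And>b. (b, a) \<in> E \<Longrightarrow> b \<notin> {a. (a, u) \<in> E\<^sup>*}"
    using wfE_min[OF wf, of u "{a. (a, u) \<in> E\<^sup>*}"] by auto
  have "in_nbrs E a = {}"
  proof (rule ccontr)
    assume "in_nbrs E a \<noteq> {}"
    then obtain b where "(b, a) \<in> E" by (auto simp: in_nbrs_def)
    then show False using m a by (meson converse_rtrancl_into_rtrancl mem_Collect_eq)
  qed
  moreover have "a \<in> V" using a assms sub by (auto elim: converse_rtranclE)
  ultimately show ?thesis using a unfolding Pl_eq players_def by auto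
qed

lemma strict:
  assumes "(v, u) \<in> E\<^sup>+"
  shows "\<exists>b \<in> Pl V E u. b \<notin> Pl V E v"
proof -
  obtain w where vw: "(v, w) \<in> E" and wu: "(w, u) \<in> E\<^sup>*" using assms by (meson tranclD)
  have wV: "w \<in> V" and vV: "v \<in> V" using vw sub by auto
  have "finite (in_nbrs E w)" using fin sub by (auto simp: in_nbrs_def intro: finite_subset)
  moreover have "v \<in> in_nbrs E w" using vw by (simp add: in_nbrs_def)
  moreover have "card (in_nbrs E w) \<noteq> 1" using indeg wV by simp
  ultimately have "in_nbrs E w \<noteq> {v}" by auto
  then obtain v' where "v' \<in> in_nbrs E w" and ne: "v' \<noteq> v" using \<open>v \<in> in_nbrs E w\<close> by blast
  then have v'w: "(v', w) \<in> E" by (simp add: in_nbrs_def)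
  have "v' \<in> V" using v'w sub by auto
  then obtain b where b: "b \<in> Pl V E v'" using nonempty by blast
  have "(v', u) \<in> E\<^sup>*" using v'w wu by simp
  then have bu: "b \<in> Pl V E u" using mono b by blast
  have "b \<notin> Pl V E v"
  proof
    assume "b \<in> Pl V E v"
    then have "(b, v) \<in> E\<^sup>*" "(b, v') \<in> E\<^sup>*" using b by (auto simp: Pl_eq)
    then have "(v, v') \<in> E\<^sup>* \<or> (v', v) \<in> E\<^sup>*" using single_valued_confluent[OF sv] by blast
    then show False
    proof
      assume "(v, v') \<in> E\<^sup>*"
      then obtain x where "(v, x) \<in> E" "(x, v') \<in> E\<^sup>*" using ne by (metis converse_rtranclE)
      then have "(w, v') \<in> E\<^sup>*" using vw sv by (metis single_valuedD)
      then have "(w, w) \<in> E\<^sup>+" using v'w by simp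
      then show False using acyc by (simp add: acyclic_def)
    next
      assume "(v', v) \<in> E\<^sup>*"
      then obtain x where "(v', x) \<in> E" "(x, v) \<in> E\<^sup>*" using ne by (metis converse_rtranclE)
      then have "(w, v) \<in> E\<^sup>*" using v'w sv by (metis single_valuedD)
      then have "(w, w) \<in> E\<^sup>+" using vw by simp
      then show False using acyc by (simp add: acyclic_def)
    qed
  qed
  then show ?thesis using bu by blast
qed

lemma common:
  assumes "a \<in> Pl V E u" "a \<in> Pl V E v"
  shows "(u, v) \<in> E\<^sup>* \<or> (v, u) \<in> E\<^sup>*"
  using assms single_valued_confluent[OF sv] by (auto simp: Pl_eq)

lemma rt_tr: "(u, v) \<in> E\<^sup>* \<Longrightarrow> u \<noteq> v \<Longrightarrow> (u, v) \<in> E\<^sup>+"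
  by (simp add: rtrancl_eq_or_trancl)

end

theorem proposition3p3:
  assumes T: "single_elim_tournament V E"
  shows "(\<forall>u \<in> V. Pl V E u \<noteq> {})
       \<and> (\<forall>u \<in> V. \<forall>v \<in> V. Pl V E u = Pl V E v \<longleftrightarrow> u = v)
       \<and> (\<forall>u \<in> V. \<forall>v \<in> V. Pl V E u \<subseteq> Pl V E v \<longleftrightarrow> has_dwalk V E u v)
       \<and> (\<forall>u \<in> V. \<forall>v \<in> V. u \<noteq> v \<longrightarrow>
            Pl V E u \<inter> Pl V E v = {} \<or> Pl V E u \<subset> Pl V E v \<or> Pl V E v \<subset> Pl V E u)
       \<and> (\<forall>x \<in> matches V E.
            partition_on (Pl V E x) (Pl V E ` in_nbrs E x)
            \<and> (\<forall>u \<in> in_nbrs E x. Pl V E u \<subset> Pl V E x \<and> Pl V E u \<noteq> {}))"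
proof -
  interpret SET V E using T by unfold_locales
  have i: "\<forall>u \<in> V. Pl V E u \<noteq> {}" using nonempty by blast
  have ii: "\<forall>u \<in> V. \<forall>v \<in> V. Pl V E u = Pl V E v \<longleftrightarrow> u = v"
  proof (intro ballI iffI)
    fix u v assume uv: "u \<in> V" "v \<in> V" and eq: "Pl V E u = Pl V E v"
    obtain a where "a \<in> Pl V E u" using nonempty uv by blast
    then have disj: "(u, v) \<in> E\<^sup>* \<or> (v, u) \<in> E\<^sup>*" using common eq by blast
    show "u = v"
    proof (rule ccontr)
      assume ne: "u \<noteq> v"
      from disj show False
      proof
        assume "(u, v) \<in> E\<^sup>*" then have "(u, v) \<in> E\<^sup>+" using rt_tr ne by blast
        then show False using strict[of u v] eq by blast
      next
        assume "(v, u) \<in> E\<^sup>*" then have "(v, u) \<in> E\<^sup>+" using rt_tr ne by blast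
        then show False using strict[of v u] eq by blast
      qed
    qed
  qed simp
  have iii: "\<forall>u \<in> V. \<forall>v \<in> V. Pl V E u \<subseteq> Pl V E v \<longleftrightarrow> has_dwalk V E u v"
  proof (intro ballI iffI)
    fix u v assume uv: "u \<in> V" "v \<in> V" and le: "Pl V E u \<subseteq> Pl V E v"
    obtain a where "a \<in> Pl V E u" using nonempty uv by blast
    then have disj: "(u, v) \<in> E\<^sup>* \<or> (v, u) \<in> E\<^sup>*" using common le by blast
    have "(u, v) \<in> E\<^sup>*"
    proof (rule ccontr)
      assume nr: "(u, v) \<notin> E\<^sup>*"
      then have "u \<noteq> v" by auto
      then have "(v, u) \<in> E\<^sup>+" using disj nr rt_tr by blast
      then show False using strict[of v u] le by blast
    qed
    then show "has_dwalk V E u v" using has_dwalk_iff[OF sub] uv by simp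
  next
    fix u v assume "has_dwalk V E u v"
    then show "Pl V E u \<subseteq> Pl V E v" using has_dwalk_iff[OF sub] mono by blast
  qed
  have iv: "\<forall>u \<in> V. \<forall>v \<in> V. u \<noteq> v \<longrightarrow>
            Pl V E u \<inter> Pl V E v = {} \<or> Pl V E u \<subset> Pl V E v \<or> Pl V E v \<subset> Pl V E u"
  proof (intro ballI impI)
    fix u v assume uv: "u \<in> V" "v \<in> V" "u \<noteq> v"
    show "Pl V E u \<inter> Pl V E v = {} \<or> Pl V E u \<subset> Pl V E v \<or> Pl V E v \<subset> Pl V E u"
    proof (cases "Pl V E u \<inter> Pl V E v = {}")
      case False
      then obtain a where "a \<in> Pl V E u" "a \<in> Pl V E v" by blast
      then have "(u, v) \<in> E\<^sup>* \<or> (v, u) \<in> E\<^sup>*" using common by blast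
      then show ?thesis
      proof
        assume "(u, v) \<in> E\<^sup>*"
        then have "(u, v) \<in> E\<^sup>+" "Pl V E u \<subseteq> Pl V E v" using rt_tr uv(3) mono by blast+
        then have "Pl V E u \<subset> Pl V E v" using strict[of u v] by blast
        then show ?thesis by blast
      next
        assume "(v, u) \<in> E\<^sup>*"
        then have "(v, u) \<in> E\<^sup>+" "Pl V E v \<subseteq> Pl V E u" using rt_tr uv(3) mono by blast+
        then have "Pl V E v \<subset> Pl V E u" using strict[of v u] by blast
        then show ?thesis by blast
      qed
    qed simp
  qed
  have v: "\<forall>x \<in> matches V E.
            partition_on (Pl V E x) (Pl V E ` in_nbrs E x)
            \<and> (\<forall>u \<in> in_nbrs E x. Pl V E u \<subset> Pl V E x \<and> Pl V E u \<noteq> {})"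
  proof
    fix x assume x: "x \<in> matches V E"
    then have xV: "x \<in> V" and xin: "in_nbrs E x \<noteq> {}" by (auto simp: matches_def players_def)
    have sub1: "\<forall>u \<in> in_nbrs E x. Pl V E u \<subset> Pl V E x \<and> Pl V E u \<noteq> {}"
    proof
      fix u assume "u \<in> in_nbrs E x"
      then have ux: "(u, x) \<in> E" by (simp add: in_nbrs_def)
      then have "u \<in> V" using sub by auto
      then show "Pl V E u \<subset> Pl V E x \<and> Pl V E u \<noteq> {}"
        using nonempty strict[of u x] mono[of u x] ux by blast
    qed
    have un: "\<Union>(Pl V E ` in_nbrs E x) = Pl V E x"
    proof
      show "\<Union>(Pl V E ` in_nbrs E x) \<subseteq> Pl V E x" using sub1 by blast
      show "Pl V E x \<subseteq> \<Union>(Pl V E ` in_nbrs E x)"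
      proof
        fix a assume a: "a \<in> Pl V E x"
        then have ax: "(a, x) \<in> E\<^sup>*" and ap: "a \<in> players V E" by (auto simp: Pl_eq)
        have "a \<noteq> x" using ap xin by (auto simp: players_def)
        then obtain u where "(a, u) \<in> E\<^sup>*" "(u, x) \<in> E" using ax by (metis rtranclE)
        then show "a \<in> \<Union>(Pl V E ` in_nbrs E x)" using ap
          by (auto simp: Pl_eq in_nbrs_def)
      qed
    qed
    have dj: "disjoint (Pl V E ` in_nbrs E x)"
    proof (rule disjointI)
      fix A B assume A: "A \<in> Pl V E ` in_nbrs E x" and B: "B \<in> Pl V E ` in_nbrs E x" and AB: "A \<noteq> B"
      then obtain u u' where u: "u \<in> in_nbrs E x" and u': "u' \<in> in_nbrs E x"
        and Au: "A = Pl V E u" and Bu: "B = Pl V E u'" by blast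
      then have uu: "u \<noteq> u'" using AB by blast
      have ux: "(u, x) \<in> E" and u'x: "(u', x) \<in> E" using u u' by (auto simp: in_nbrs_def)
      show "A \<inter> B = {}" unfolding Au Bu
      proof (rule ccontr)
        assume "Pl V E u \<inter> Pl V E u' \<noteq> {}"
        then obtain a where "a \<in> Pl V E u" "a \<in> Pl V E u'" by blast
        then have "(u, u') \<in> E\<^sup>* \<or> (u', u) \<in> E\<^sup>*" using common by blast
        then show False
        proof
          assume "(u, u') \<in> E\<^sup>*"
          then obtain y where "(u, y) \<in> E" "(y, u') \<in> E\<^sup>*" using uu by (metis converse_rtranclE)
          then have "(x, u') \<in> E\<^sup>*" using ux sv by (metis single_valuedD)
          then have "(x, x) \<in> E\<^sup>+" using u'x by simp
          then show False using acyc by (simp add: acyclic_def)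
        next
          assume "(u', u) \<in> E\<^sup>*"
          then obtain y where "(u', y) \<in> E" "(y, u) \<in> E\<^sup>*" using uu by (metis converse_rtranclE)
          then have "(x, u) \<in> E\<^sup>*" using u'x sv by (metis single_valuedD)
          then have "(x, x) \<in> E\<^sup>+" using ux by simp
          then show False using acyc by (simp add: acyclic_def)
        qed
      qed
    qed
    have "{} \<notin> Pl V E ` in_nbrs E x" using sub1 by auto
    then show "partition_on (Pl V E x) (Pl V E ` in_nbrs E x) \<and>
      (\<forall>u \<in> in_nbrs E x. Pl V E u \<subset> Pl V E x \<and> Pl V E u \<noteq> {})"
      using un dj sub1 by (simp add: partition_on_def)
  qed
  show ?thesis using i ii iii iv v by blast
qed

end
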